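(* Let $G$ be a finite group with conjugacy classes $\mathcal{C}_1,\dots,\mathcal{C}_s$, let $r\geq 2$ be a prime, and let $g\in G\wr S_n$ have type $T(g)=(T(g)_{ij})_{s\times n}$. Then for $1\le i\le s$, $1\le j\le n$, $$T(g^r)_{i,j}=\begin{cases}\sum_{z=1}^{m}T(g)_{y_z,j}+rT(g)_{i,rj} & \text{if } r\nmid j,\\ rT(g)_{i,rj} & \text{if } r\mid j,\end{cases}$$ where $\{y_1,\dots,y_m\}\subseteq\{1,\dots,s\}$ is the set of all indices $k$ with $(\mathcal{C}_k)^r=\mathcal{C}_i$, and by convention $T(g)_{i,rj}=0$ when $rj>n$.
   Context: $G\wr S_n$ is the set of pairs $(f,\pi)$ with $f:\{1,\dots,n\}\to G$ and $\pi\in S_n$, with product $(f,\pi)(f',\pi')=(ff'_\pi,\pi\pi')$, $f'_\pi(i)=f'(\pi^{-1}(i))$, pointwise product of functions. For $(f,\pi)$ and a cycle $(j,\pi(j),\dots,\pi^t(j))$ of $\pi$, its cycle product is $f(j)f(\pi^{-1}(j))\cdots f(\pi^{-t}(j))$; its conjugacy class is independent of the starting point. The type $T(g)$ of $g=(f,\pi)$ is the $s\times n$ matrix whose $(i,k)$ entry is the number of $k$-cycles of $\pi$ whose cycle product lies in $\mathcal{C}_i$. For a conjugacy class $\mathcal{C}$ of $G$, $(\mathcal{C})^r=\{x^r: x\in\mathcal{C}\}$, which is again a conjugacy class of $G$. *)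

theory Defs
  imports "HOL-Algebra.Group" "HOL-Combinatorics.Permutations" "HOL-Computational_Algebra.Primes"
begin

definition wreath_elem :: "('a, 'b) monoid_scheme \<Rightarrow> nat \<Rightarrow> (nat \<Rightarrow> 'a) \<times> (nat \<Rightarrow> nat) \<Rightarrow> bool" where
  "wreath_elem G n g \<longleftrightarrow> (\<forall>i\<in>{1..n}. fst g i \<in> carrier G) \<and> snd g permutes {1..n}"

definition wreath_mult :: "('a, 'b) monoid_scheme \<Rightarrow> (nat \<Rightarrow> 'a) \<times> (nat \<Rightarrow> nat) \<Rightarrow> (nat \<Rightarrow> 'a) \<times> (nat \<Rightarrow> nat) \<Rightarrow> (nat \<Rightarrow> 'a) \<times> (nat \<Rightarrow> nat)" where
  "wreath_mult G g h = ((\<lambda>i. fst g i \<otimes>\<^bsub>G\<^esub> fst h (Hilbert_Choice.inv (snd g) i)), snd g \<circ> snd h)"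

fun wreath_pow :: "('a, 'b) monoid_scheme \<Rightarrow> (nat \<Rightarrow> 'a) \<times> (nat \<Rightarrow> nat) \<Rightarrow> nat \<Rightarrow> (nat \<Rightarrow> 'a) \<times> (nat \<Rightarrow> nat)" where
  "wreath_pow G g 0 = ((\<lambda>i. \<one>\<^bsub>G\<^esub>), id)"
| "wreath_pow G g (Suc m) = wreath_mult G (wreath_pow G g m) g"

definition perm_cycle :: "(nat \<Rightarrow> nat) \<Rightarrow> nat \<Rightarrow> nat set" where
  "perm_cycle p j = {(p ^^ m) j | m. True}"

fun cycle_prod_aux :: "('a, 'b) monoid_scheme \<Rightarrow> (nat \<Rightarrow> 'a) \<Rightarrow> (nat \<Rightarrow> nat) \<Rightarrow> nat \<Rightarrow> nat \<Rightarrow> 'a" where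
  "cycle_prod_aux G f p j 0 = \<one>\<^bsub>G\<^esub>"
| "cycle_prod_aux G f p j (Suc m) = f j \<otimes>\<^bsub>G\<^esub> cycle_prod_aux G f p (Hilbert_Choice.inv p j) m"

definition cycle_prod :: "('a, 'b) monoid_scheme \<Rightarrow> (nat \<Rightarrow> 'a) \<times> (nat \<Rightarrow> nat) \<Rightarrow> nat \<Rightarrow> 'a" where
  "cycle_prod G g j = cycle_prod_aux G (fst g) (snd g) j (card (perm_cycle (snd g) j))"

definition conj_class :: "('a, 'b) monoid_scheme \<Rightarrow> 'a \<Rightarrow> 'a set" where
  "conj_class G x = {inv\<^bsub>G\<^esub> h \<otimes>\<^bsub>G\<^esub> x \<otimes>\<^bsub>G\<^esub> h | h. h \<in> carrier G}"

definition conj_classes :: "('a, 'b) monoid_scheme \<Rightarrow> 'a set set" where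
  "conj_classes G = conj_class G ` carrier G"

definition class_pow :: "('a, 'b) monoid_scheme \<Rightarrow> 'a set \<Rightarrow> nat \<Rightarrow> 'a set" where
  "class_pow G C r = (\<lambda>x. x [^]\<^bsub>G\<^esub> r) ` C"

text \<open>Type entry T(g)_{C,k}: number of k-cycles of pi whose cycle product lies in C
  (the cycle product's conjugacy class is independent of the starting point).
  Automatically 0 when k > n.\<close>
definition wreath_type :: "('a, 'b) monoid_scheme \<Rightarrow> nat \<Rightarrow> (nat \<Rightarrow> 'a) \<times> (nat \<Rightarrow> nat) \<Rightarrow> 'a set \<Rightarrow> nat \<Rightarrow> nat" where
  "wreath_type G n g C k = card {Z. \<exists>j\<in>{1..n}. Z = perm_cycle (snd g) j \<and> card Z = k \<and>
       (\<exists>i\<in>Z. cycle_prod G g i \<in> C)}"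

end

theory Submission
  imports Defs
begin

lemma pc_funpow_mod:
  assumes "(s ^^ d) x = x"
  shows "(s ^^ m) x = (s ^^ (m mod d)) x"
proof -
  have k: "(s ^^ (k * d)) x = x" for k
    by (induction k) (simp_all add: funpow_add assms)
  have "(s ^^ m) x = (s ^^ (m mod d)) ((s ^^ ((m div d) * d)) x)"
    by (metis div_mult_mod_eq funpow_add comp_apply add.commute)
  then show ?thesis using k by simp
qed

lemma my_permutes_funpow:
  assumes "p permutes S" shows "(p ^^ n) permutes S"
  using assms by (induct n) (simp add: permutes_def, metis funpow_Suc_right permutes_compose)

lemma pc_subset:
  assumes "s permutes S" "x \<in> S"
  shows "perm_cycle s x \<subseteq> S"
  using permutes_in_image[OF my_permutes_funpow[OF assms(1)]] assms(2)
  unfolding perm_cycle_def by auto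

lemma pc_period:
  assumes "s permutes S" "finite S" "x \<in> S"
  shows "0 < card (perm_cycle s x) \<and> (\<forall>m. (s ^^ m) x = x \<longleftrightarrow> card (perm_cycle s x) dvd m)"
proof -
  have bij: "bij s" using assms(1) by (rule permutes_bij)
  have fin: "finite {y. \<exists>n. y = (s ^^ n) x}"
    using pc_subset[OF assms(1,3)] assms(2) unfolding perm_cycle_def
    by (auto intro: finite_subset)
  obtain n0 where n0: "n0 > 0" "(s ^^ n0) x = x"
    using funpow_inj_finite[OF bij_is_inj[OF bij] fin] by blast
  define d where "d = (LEAST k. 0 < k \<and> (s ^^ k) x = x)"
  have d: "0 < d" "(s ^^ d) x = x"
    using LeastI[of "\<lambda>k. 0 < k \<and> (s ^^ k) x = x", OF conjI[OF n0]] unfolding d_def by auto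
  have dmin: "k < d \<Longrightarrow> 0 < k \<Longrightarrow> (s ^^ k) x \<noteq> x" for k
    using not_less_Least[of k "\<lambda>k. 0 < k \<and> (s ^^ k) x = x"] unfolding d_def by auto
  have iff: "(s ^^ m) x = x \<longleftrightarrow> d dvd m" for m
  proof
    assume "(s ^^ m) x = x"
    then have "(s ^^ (m mod d)) x = x" using pc_funpow_mod[OF d(2)] by simp
    then have "m mod d = 0" using dmin[of "m mod d"] d(1) by (meson mod_less_divisor neq0_conv)
    then show "d dvd m" by auto
  next
    assume "d dvd m"
    then show "(s ^^ m) x = x" using pc_funpow_mod[OF d(2), of m] by simp
  qed
  have pc: "perm_cycle s x = (\<lambda>k. (s ^^ k) x) ` {..<d}"
  proof
    show "perm_cycle s x \<subseteq> (\<lambda>k. (s ^^ k) x) ` {..<d}"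
    proof
      fix y assume "y \<in> perm_cycle s x"
      then obtain m where "y = (s ^^ m) x" unfolding perm_cycle_def by auto
      then show "y \<in> (\<lambda>k. (s ^^ k) x) ` {..<d}"
        using pc_funpow_mod[OF d(2), of m] d(1) by (intro image_eqI[of _ _ "m mod d"]) auto
    qed
  qed (auto simp: perm_cycle_def)
  have inj: "inj_on (\<lambda>k. (s ^^ k) x) {..<d}"
  proof (rule inj_onI)
    have gen: "a < b \<Longrightarrow> b < d \<Longrightarrow> (s ^^ a) x \<noteq> (s ^^ b) x" for a b
    proof
      assume ab: "a < b" "b < d" "(s ^^ a) x = (s ^^ b) x"
      have "(s ^^ a) ((s ^^ (b - a)) x) = (s ^^ b) x"
        using ab by (metis funpow_add comp_apply le_add_diff_inverse less_imp_le)
      then have "(s ^^ a) ((s ^^ (b - a)) x) = (s ^^ a) x" using ab by simp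
      then have "(s ^^ (b - a)) x = x"
        using inj_fn[OF bij_is_inj[OF bij], of a] by (meson injD)
      then show False using dmin[of "b - a"] ab by auto
    qed
    fix a b assume "a \<in> {..<d}" "b \<in> {..<d}" "(s ^^ a) x = (s ^^ b) x"
    then show "a = b" using gen[of a b] gen[of b a] by (metis lessThan_iff linorder_neqE_nat)
  qed
  have "card (perm_cycle s x) = d" using pc card_image[OF inj] by simp
  then show ?thesis using d iff by simp
qed

lemma pc_self: "x \<in> perm_cycle s x"
  unfolding perm_cycle_def by (auto intro: exI[of _ 0])

lemma pc_eq:
  assumes "s permutes S" "finite S" "x \<in> S" "y \<in> perm_cycle s x"
  shows "perm_cycle s y = perm_cycle s x"
proof -
  obtain a where a: "y = (s ^^ a) x" using assms(4) unfolding perm_cycle_def by auto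
  define L where "L = card (perm_cycle s x)"
  have L: "0 < L" "\<And>m. (s ^^ m) x = x \<longleftrightarrow> L dvd m"
    using pc_period[OF assms(1-3)] unfolding L_def by auto
  show ?thesis
  proof
    show "perm_cycle s y \<subseteq> perm_cycle s x"
      unfolding perm_cycle_def a by (auto, metis funpow_add comp_apply)
  next
    show "perm_cycle s x \<subseteq> perm_cycle s y"
    proof
      fix z assume "z \<in> perm_cycle s x"
      then obtain m where m: "z = (s ^^ m) x" unfolding perm_cycle_def by auto
      have e: "(s ^^ (L * a)) x = x" using L by simp
      have "a \<le> L * a" using L(1) by simp
      then have "(s ^^ (m + L * a - a)) y = (s ^^ (m + L * a)) x"
        unfolding a by (metis funpow_add comp_apply le_add2 le_add_diff_inverse2 add_diff_assoc order_trans)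
      also have "\<dots> = z" unfolding m using e by (metis funpow_add comp_apply)
      finally show "z \<in> perm_cycle s y" unfolding perm_cycle_def by (auto intro: exI)
    qed
  qed
qed

lemma pc_inv:
  assumes "s permutes S" "x \<in> S" "\<forall>z\<in>S. Q (s z) = Q z" "y \<in> perm_cycle s x"
  shows "Q y = Q x"
proof -
  obtain a where a: "y = (s ^^ a) x" using assms(4) unfolding perm_cycle_def by auto
  have "(s ^^ m) x \<in> S \<and> Q ((s ^^ m) x) = Q x" for m
  proof (induction m)
    case (Suc m)
    then show ?case using assms(1,3) permutes_in_image[OF assms(1)] by auto
  qed (use assms in auto)
  then show ?thesis using a by auto
qed

lemma pc_count:
  assumes "s permutes S" "finite S" "\<forall>z\<in>S. Q (s z) = Q z"
  shows "card {Z. \<exists>x\<in>S. Z = perm_cycle s x \<and> card Z = k \<and> (\<exists>i\<in>Z. Q i)} * k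
       = card {x\<in>S. card (perm_cycle s x) = k \<and> Q x}"
proof -
  let ?U = "{Z. \<exists>x\<in>S. Z = perm_cycle s x \<and> card Z = k \<and> (\<exists>i\<in>Z. Q i)}"
  have U: "\<Union>?U = {x\<in>S. card (perm_cycle s x) = k \<and> Q x}"
  proof
    show "\<Union>?U \<subseteq> {x\<in>S. card (perm_cycle s x) = k \<and> Q x}"
    proof
      fix y assume "y \<in> \<Union>?U"
      then obtain x i where x: "x \<in> S" "y \<in> perm_cycle s x" "card (perm_cycle s x) = k"
        "i \<in> perm_cycle s x" "Q i" by auto
      have "y \<in> S" using pc_subset[OF assms(1) x(1)] x(2) by auto
      moreover have "perm_cycle s y = perm_cycle s x" using pc_eq[OF assms(1,2) x(1,2)] .
      moreover have "Q y" using pc_inv[OF assms(1) x(1) assms(3)] x by metis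
      ultimately show "y \<in> {x\<in>S. card (perm_cycle s x) = k \<and> Q x}" using x by auto
    qed
  next
    show "{x\<in>S. card (perm_cycle s x) = k \<and> Q x} \<subseteq> \<Union>?U"
      using pc_self by fastforce
  qed
  have fin: "finite ?U"
    by (rule finite_subset[of _ "Pow S"]) (use pc_subset[OF assms(1)] assms(2) in auto)
  have "k * card ?U = card (\<Union>?U)"
  proof -
    have f1: "finite (\<Union>?U)" unfolding U using assms(2) by auto
    have f2: "\<And>c. c \<in> ?U \<Longrightarrow> card c = k" by auto
    have f3: "c1 \<inter> c2 = {}" if c: "c1 \<in> ?U" "c2 \<in> ?U" "c1 \<noteq> c2" for c1 c2
    proof -
      from c obtain x1 x2 where x: "x1 \<in> S" "c1 = perm_cycle s x1" "x2 \<in> S" "c2 = perm_cycle s x2" by auto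
      show "c1 \<inter> c2 = {}"
      proof (rule ccontr)
        assume "c1 \<inter> c2 \<noteq> {}"
        then obtain z where "z \<in> c1" "z \<in> c2" by auto
        then show False using pc_eq[OF assms(1,2) x(1)] pc_eq[OF assms(1,2) x(3)] x c(3) by metis
      qed
    qed
    show ?thesis by (rule card_partition[OF fin f1 f2 f3])
  qed
  then show ?thesis using U by (simp add: mult.commute)
qed

context group
begin

lemma canc1: "h \<in> carrier G \<Longrightarrow> z \<in> carrier G \<Longrightarrow> h \<otimes> (inv h \<otimes> z) = z"
  by (simp add: m_assoc[symmetric])
lemma canc2: "h \<in> carrier G \<Longrightarrow> z \<in> carrier G \<Longrightarrow> inv h \<otimes> (h \<otimes> z) = z"
  by (simp add: m_assoc[symmetric])

lemma cc_carrier: "c \<in> carrier G \<Longrightarrow> conj_class G c \<subseteq> carrier G"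
  unfolding conj_class_def by auto

lemma cc_self: "c \<in> carrier G \<Longrightarrow> c \<in> conj_class G c"
  unfolding conj_class_def by (auto intro!: exI[of _ "\<one>"])

lemma cc_sub:
  assumes "c \<in> carrier G" "x \<in> conj_class G c"
  shows "conj_class G x \<subseteq> conj_class G c"
proof
  obtain h where h: "h \<in> carrier G" "x = inv h \<otimes> c \<otimes> h" using assms unfolding conj_class_def by auto
  fix y assume "y \<in> conj_class G x"
  then obtain k where k: "k \<in> carrier G" "y = inv k \<otimes> x \<otimes> k" unfolding conj_class_def by auto
  have "y = inv (h \<otimes> k) \<otimes> c \<otimes> (h \<otimes> k)"
    using h k assms(1) by (simp add: inv_mult_group m_assoc)
  then show "y \<in> conj_class G c" unfolding conj_class_def using h k by blast
qed

lemma cc_symm: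
  assumes "c \<in> carrier G" "x \<in> conj_class G c"
  shows "c \<in> conj_class G x"
proof -
  obtain h where h: "h \<in> carrier G" "x = inv h \<otimes> c \<otimes> h" using assms unfolding conj_class_def by auto
  have "c = inv (inv h) \<otimes> x \<otimes> inv h"
    using h assms(1) by (simp add: m_assoc canc1)
  then show ?thesis unfolding conj_class_def using h by blast
qed

lemma cc_eq:
  assumes "c \<in> carrier G" "x \<in> conj_class G c"
  shows "conj_class G x = conj_class G c"
proof -
  have x: "x \<in> carrier G" using cc_carrier[OF assms(1)] assms(2) by auto
  show ?thesis using cc_sub[OF assms] cc_sub[OF x cc_symm[OF assms]] by auto
qed

lemma ccs_in:
  assumes "C \<in> conj_classes G" "z \<in> C"
  shows "conj_class G z = C"
  using assms cc_eq unfolding conj_classes_def by auto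

lemma ccs_carrier: "C \<in> conj_classes G \<Longrightarrow> C \<subseteq> carrier G"
  using cc_carrier unfolding conj_classes_def by auto

lemma ccs_disj:
  assumes "C \<in> conj_classes G" "D \<in> conj_classes G" "z \<in> C" "z \<in> D"
  shows "C = D"
  using ccs_in[OF assms(1,3)] ccs_in[OF assms(2,4)] by simp

lemma ccs_comm:
  assumes "C \<in> conj_classes G" "a \<in> carrier G" "b \<in> carrier G"
  shows "a \<otimes> b \<in> C \<longleftrightarrow> b \<otimes> a \<in> C"
proof -
  have "a \<otimes> b = inv b \<otimes> (b \<otimes> a) \<otimes> b" using assms(2,3) by (simp add: m_assoc canc2)
  then have 1: "a \<otimes> b \<in> conj_class G (b \<otimes> a)" unfolding conj_class_def using assms(3) by blast
  have ba: "b \<otimes> a \<in> carrier G" using assms by simp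
  show ?thesis
  proof
    assume "a \<otimes> b \<in> C"
    then have "conj_class G (a \<otimes> b) = C" by (rule ccs_in[OF assms(1)])
    then show "b \<otimes> a \<in> C" using cc_eq[OF ba 1] cc_self[OF ba] by simp
  next
    assume "b \<otimes> a \<in> C"
    then have "conj_class G (b \<otimes> a) = C" by (rule ccs_in[OF assms(1)])
    then show "a \<otimes> b \<in> C" using 1 by simp
  qed
qed

lemma conj_pow:
  assumes "h \<in> carrier G" "y \<in> carrier G"
  shows "(inv h \<otimes> y \<otimes> h) [^] (m::nat) = inv h \<otimes> y [^] m \<otimes> h"
proof (induction m)
  case 0 then show ?case using assms by simp
next
  case (Suc m)
  have "(inv h \<otimes> y \<otimes> h) [^] Suc m = (inv h \<otimes> y [^] m \<otimes> h) \<otimes> (inv h \<otimes> y \<otimes> h)"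
    using Suc by simp
  also have "\<dots> = inv h \<otimes> (y [^] m \<otimes> y) \<otimes> h"
  proof -
    have c: "h \<otimes> (inv h \<otimes> z) = z" if "z \<in> carrier G" for z
      using that assms by (simp add: m_assoc[symmetric])
    show ?thesis using assms by (simp add: m_assoc c)
  qed
  finally show ?case by simp
qed

lemma class_pow_cc:
  assumes "y \<in> carrier G"
  shows "class_pow G (conj_class G y) r = conj_class G (y [^] r)"
proof
  show "class_pow G (conj_class G y) r \<subseteq> conj_class G (y [^] r)"
    unfolding class_pow_def conj_class_def using conj_pow[OF _ assms] by auto
  show "conj_class G (y [^] r) \<subseteq> class_pow G (conj_class G y) r"
  proof
    fix z assume "z \<in> conj_class G (y [^] r)"
    then obtain h where h: "h \<in> carrier G" "z = inv h \<otimes> y [^] r \<otimes> h" unfolding conj_class_def by auto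
    have "z = (inv h \<otimes> y \<otimes> h) [^] r" using h conj_pow[OF h(1) assms] by simp
    moreover have "inv h \<otimes> y \<otimes> h \<in> conj_class G y" unfolding conj_class_def using h by blast
    ultimately show "z \<in> class_pow G (conj_class G y) r" unfolding class_pow_def by blast
  qed
qed


lemma aux_carrier:
  assumes "p permutes S" "\<forall>i\<in>S. f i \<in> carrier G" "j \<in> S"
  shows "cycle_prod_aux G f p j m \<in> carrier G"
  using assms(3)
proof (induction m arbitrary: j)
  case (Suc m)
  have "Hilbert_Choice.inv p j \<in> S"
    using permutes_in_image[OF permutes_inv[OF assms(1)]] Suc.prems by simp
  then show ?case using Suc assms(2) by simp
qed simp

lemma aux_add:
  assumes "p permutes S" "\<forall>i\<in>S. f i \<in> carrier G" "j \<in> S"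
  shows "cycle_prod_aux G f p j (a + b) =
    cycle_prod_aux G f p j a \<otimes> cycle_prod_aux G f p ((Hilbert_Choice.inv p ^^ a) j) b"
  using assms(3)
proof (induction a arbitrary: j)
  case 0
  then show ?case using aux_carrier[OF assms(1,2)] by simp
next
  case (Suc a)
  have qj: "Hilbert_Choice.inv p j \<in> S"
    using permutes_in_image[OF permutes_inv[OF assms(1)]] Suc.prems by simp
  have qa: "(Hilbert_Choice.inv p ^^ a) (Hilbert_Choice.inv p j) = (Hilbert_Choice.inv p ^^ Suc a) j"
    by (simp add: funpow_swap1)
  have qaS: "(Hilbert_Choice.inv p ^^ Suc a) j \<in> S"
    using permutes_in_image[OF my_permutes_funpow[OF permutes_inv[OF assms(1)]]] Suc.prems by blast
  show ?case using Suc.IH[OF qj] qa Suc.prems assms(2) aux_carrier[OF assms(1,2) qj] aux_carrier[OF assms(1,2) qaS]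
    by (simp add: m_assoc)
qed

lemma aux_pow:
  assumes "p permutes S" "\<forall>i\<in>S. f i \<in> carrier G" "j \<in> S" "(Hilbert_Choice.inv p ^^ L) j = j"
  shows "cycle_prod_aux G f p j (c * L) = cycle_prod_aux G f p j L [^] c"
proof (induction c)
  case 0 then show ?case by simp
next
  case (Suc c)
  have e: "(Hilbert_Choice.inv p ^^ (c * L)) j = j"
    by (induction c) (simp_all add: funpow_add assms(4))
  have "cycle_prod_aux G f p j (Suc c * L) = cycle_prod_aux G f p j (c * L + L)"
    by (simp add: add.commute)
  also have "\<dots> = cycle_prod_aux G f p j (c * L) \<otimes> cycle_prod_aux G f p j L"
    using aux_add[OF assms(1-3), of "c * L" L] e by simp
  finally show ?case using Suc by simp
qed

lemma aux_block:
  assumes "p permutes S" "\<forall>i\<in>S. f i \<in> carrier G" "j \<in> S"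
    and F: "\<forall>i\<in>S. F i = cycle_prod_aux G f p i r"
  shows "cycle_prod_aux G F (p ^^ r) j m = cycle_prod_aux G f p j (r * m)"
  using assms(3)
proof (induction m arbitrary: j)
  case 0 then show ?case by simp
next
  case (Suc m)
  have iv: "Hilbert_Choice.inv (p ^^ r) = Hilbert_Choice.inv p ^^ r"
    using inv_fn[OF permutes_bij[OF assms(1)]] .
  have qS: "(Hilbert_Choice.inv p ^^ r) j \<in> S"
    using permutes_in_image[OF my_permutes_funpow[OF permutes_inv[OF assms(1)]]] Suc.prems by blast
  have "cycle_prod_aux G F (p ^^ r) j (Suc m) = F j \<otimes> cycle_prod_aux G f p ((Hilbert_Choice.inv p ^^ r) j) (r * m)"
    using Suc.IH[OF qS] iv by simp
  also have "\<dots> = cycle_prod_aux G f p j (r + r * m)"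
    using aux_add[OF assms(1,2) Suc.prems] F Suc.prems by simp
  finally show ?case by simp
qed

lemma pow_snd: "snd (wreath_pow G g m) = snd g ^^ m"
  by (induction m) (simp_all add: wreath_mult_def funpow_Suc_right del: funpow.simps)

lemma pow_fst:
  assumes "wreath_elem G n g" "i \<in> {1..n}"
  shows "fst (wreath_pow G g m) i = cycle_prod_aux G (fst g) (snd g) i m"
proof (induction m)
  case 0 then show ?case by simp
next
  case (Suc m)
  have p: "snd g permutes {1..n}" and f: "\<forall>i\<in>{1..n}. fst g i \<in> carrier G"
    using assms(1) unfolding wreath_elem_def by auto
  have iv: "Hilbert_Choice.inv (snd g ^^ m) = Hilbert_Choice.inv (snd g) ^^ m"
    using inv_fn[OF permutes_bij[OF p]] .
  have qS: "(Hilbert_Choice.inv (snd g) ^^ m) i \<in> {1..n}"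
    using permutes_in_image[OF my_permutes_funpow[OF permutes_inv[OF p]]] assms(2) by blast
  have "fst (wreath_pow G g (Suc m)) i = cycle_prod_aux G (fst g) (snd g) i m \<otimes> fst g ((Hilbert_Choice.inv (snd g) ^^ m) i)"
    using Suc iv by (simp add: wreath_mult_def pow_snd)
  also have "\<dots> = cycle_prod_aux G (fst g) (snd g) i (m + 1)"
    using aux_add[OF p f assms(2), of m 1] f qS by simp
  finally show ?case by simp
qed

lemma pow_elem:
  assumes "wreath_elem G n g"
  shows "wreath_elem G n (wreath_pow G g m)"
proof -
  have p: "snd g permutes {1..n}" and f: "\<forall>i\<in>{1..n}. fst g i \<in> carrier G"
    using assms(1) unfolding wreath_elem_def by auto
  show ?thesis unfolding wreath_elem_def pow_snd
    using pow_fst[OF assms] aux_carrier[OF p f] my_permutes_funpow[OF p] by simp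
qed


lemma inv_period:
  assumes "p permutes S" "(p ^^ L) x = x"
  shows "(Hilbert_Choice.inv p ^^ L) x = x"
proof -
  have "Hilbert_Choice.inv (p ^^ L) x = x"
    using assms(2) inv_f_eq[OF bij_is_inj[OF bij_fn[OF permutes_bij[OF assms(1)]]]] by metis
  then show ?thesis using inv_fn[OF permutes_bij[OF assms(1)]] by simp
qed

lemma cp_invariant:
  assumes "wreath_elem G n h" "C \<in> conj_classes G" "x \<in> {1..n}"
  shows "cycle_prod G h (snd h x) \<in> C \<longleftrightarrow> cycle_prod G h x \<in> C"
proof -
  define p where "p = snd h"
  define f where "f = fst h"
  define q where "q = Hilbert_Choice.inv p"
  have p: "p permutes {1..n}" and f: "\<forall>i\<in>{1..n}. f i \<in> carrier G"
    using assms(1) unfolding wreath_elem_def p_def f_def by auto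
  define L where "L = card (perm_cycle p x)"
  have per: "0 < L" "\<And>m. (p ^^ m) x = x \<longleftrightarrow> L dvd m"
    using pc_period[OF p _ assms(3)] unfolding L_def by auto
  have pxin: "p x \<in> perm_cycle p x" unfolding perm_cycle_def by (auto intro: exI[of _ 1])
  have L2: "card (perm_cycle p (p x)) = L"
    using pc_eq[OF p _ assms(3) pxin] unfolding L_def by simp
  obtain M where M: "L = Suc M" using per(1) gr0_implies_Suc by blast
  have qL: "(q ^^ L) x = x" using inv_period[OF p] per(2)[of L] unfolding q_def by simp
  have "p ((q ^^ L) x) = p x" using qL by simp
  then have qM: "(q ^^ M) x = p x"
    unfolding M q_def using permutes_inverses(1)[OF p] by simp
  have pxS: "p x \<in> {1..n}" using permutes_in_image[OF p] assms(3) by simp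
  have c1: "cycle_prod G h x = cycle_prod_aux G f p x M \<otimes> f (p x)"
  proof -
    have "cycle_prod G h x = cycle_prod_aux G f p x (M + 1)"
      unfolding cycle_prod_def p_def[symmetric] f_def[symmetric] L_def[symmetric] M by simp
    also have "\<dots> = cycle_prod_aux G f p x M \<otimes> f (p x)"
      using aux_add[OF p f assms(3), of M 1] qM f pxS unfolding q_def by simp
    finally show ?thesis .
  qed
  have c2: "cycle_prod G h (p x) = f (p x) \<otimes> cycle_prod_aux G f p x M"
    unfolding cycle_prod_def p_def[symmetric] f_def[symmetric] L2 M
    using permutes_inverses(2)[OF p] by simp
  show ?thesis unfolding p_def[symmetric] c1 c2
    using ccs_comm[OF assms(2) f[rule_format, OF pxS] aux_carrier[OF p f assms(3)]] by simp
qed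


lemma key:
  assumes "wreath_elem G n g" "prime r" "x \<in> {1..n}"
  defines "L \<equiv> card (perm_cycle (snd g) x)"
  shows "card (perm_cycle (snd (wreath_pow G g r)) x) = (if r dvd L then L div r else L)
    \<and> cycle_prod G (wreath_pow G g r) x = (if r dvd L then cycle_prod G g x else cycle_prod G g x [^] r)"
proof -
  define p where "p = snd g"
  define f where "f = fst g"
  have p: "p permutes {1..n}" and f: "\<forall>i\<in>{1..n}. f i \<in> carrier G"
    using assms(1) unfolding wreath_elem_def p_def f_def by auto
  have sn: "snd (wreath_pow G g r) = p ^^ r" unfolding p_def by (rule pow_snd)
  define L' where "L' = card (perm_cycle (p ^^ r) x)"
  have per: "0 < L" "\<And>m. (p ^^ m) x = x \<longleftrightarrow> L dvd m"
    using pc_period[OF p _ assms(3)] unfolding L_def p_def by auto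
  have per': "0 < L'" "\<And>m. ((p ^^ r) ^^ m) x = x \<longleftrightarrow> L' dvd m"
    using pc_period[OF my_permutes_funpow[OF p] _ assms(3)] unfolding L'_def by auto
  have dv: "L' dvd m \<longleftrightarrow> L dvd r * m" for m
    using per(2)[of "r * m"] per'(2)[of m] by (simp add: funpow_mult)
  have r0: "r > 0" using assms(2) prime_gt_0_nat by blast
  have L'eq: "L' = (if r dvd L then L div r else L)"
  proof (cases "r dvd L")
    case True
    then obtain K where K: "L = r * K" by blast
    have e: "L' dvd m \<longleftrightarrow> K dvd m" for m using dv[of m] K r0 by simp
    have "L' = K" using dvd_antisym[of L' K] e[of L'] e[of K] by simp
    then show ?thesis using K True r0 by simp
  next
    case False
    have cop: "coprime L r" using False assms(2) by (metis coprime_commute prime_imp_coprime)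
    have e: "L' dvd m \<longleftrightarrow> L dvd m" for m using dv[of m] coprime_dvd_mult_right_iff[OF cop] by simp
    have "L' = L" using dvd_antisym[of L' L] e[of L'] e[of L] by simp
    then show ?thesis using False by simp
  qed
  have Fe: "\<forall>i\<in>{1..n}. fst (wreath_pow G g r) i = cycle_prod_aux G f p i r"
    using pow_fst[OF assms(1)] unfolding f_def p_def by blast
  have cpr: "cycle_prod G (wreath_pow G g r) x = cycle_prod_aux G f p x (r * L')"
    unfolding cycle_prod_def sn L'_def[symmetric]
    using aux_block[OF p f assms(3) Fe] .
  have qL: "(Hilbert_Choice.inv p ^^ L) x = x" using inv_period[OF p] per(2)[of L] by simp
  have cpg: "cycle_prod G g x = cycle_prod_aux G f p x L"
    unfolding cycle_prod_def L_def f_def p_def ..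
  have "cycle_prod G (wreath_pow G g r) x = (if r dvd L then cycle_prod G g x else cycle_prod G g x [^] r)"
  proof (cases "r dvd L")
    case True
    then have "r * L' = L" using L'eq by simp
    then show ?thesis using cpr cpg True by simp
  next
    case False
    then have "L' = L" using L'eq by simp
    then show ?thesis using cpr cpg False aux_pow[OF p f assms(3) qL, of r] by (simp add: mult.commute)
  qed
  then show ?thesis using L'eq unfolding sn L'_def by simp
qed


lemma wt_count:
  assumes "wreath_elem G n h" "D \<in> conj_classes G"
  shows "wreath_type G n h D k * k = card {x\<in>{1..n}. card (perm_cycle (snd h) x) = k \<and> cycle_prod G h x \<in> D}"
proof -
  have p: "snd h permutes {1..n}" using assms(1) unfolding wreath_elem_def by auto
  have inv: "\<forall>z\<in>{1..n}. (cycle_prod G h (snd h z) \<in> D) = (cycle_prod G h z \<in> D)"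
    using cp_invariant[OF assms] by blast
  show ?thesis unfolding wreath_type_def
    by (rule pc_count[OF p _ inv]) simp
qed

lemma cp_carrier:
  assumes "wreath_elem G n h" "x \<in> {1..n}"
  shows "cycle_prod G h x \<in> carrier G"
proof -
  have p: "snd h permutes {1..n}" and f: "\<forall>i\<in>{1..n}. fst h i \<in> carrier G"
    using assms(1) unfolding wreath_elem_def by auto
  show ?thesis unfolding cycle_prod_def using aux_carrier[OF p f assms(2)] .
qed

end

theorem lemma4p2:
  fixes G :: "('a, 'b) monoid_scheme" and n r :: nat
    and g :: "(nat \<Rightarrow> 'a) \<times> (nat \<Rightarrow> nat)"
  assumes "group G" and "finite (carrier G)"
    and "prime r"
    and "wreath_elem G n g"
    and "C \<in> conj_classes G" and "j \<in> {1..n}"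
  shows "wreath_type G n (wreath_pow G g r) C j =
    (if \<not> r dvd j
     then (\<Sum>D\<in>{D \<in> conj_classes G. class_pow G D r = C}. wreath_type G n g D j)
          + r * wreath_type G n g C (r * j)
     else r * wreath_type G n g C (r * j))"
proof -
  interpret G: group G by (rule assms(1))
  define S where "S = {1..n}"
  define h where "h = wreath_pow G g r"
  define Lx where "Lx x = card (perm_cycle (snd g) x)" for x
  define Ds where "Ds = {D \<in> conj_classes G. class_pow G D r = C}"
  have j0: "j > 0" using assms(6) by simp
  have r0: "r > 0" using assms(3) prime_gt_0_nat by blast
  have he: "wreath_elem G n h" unfolding h_def by (rule G.pow_elem[OF assms(4)])
  define X where "X = {x\<in>S. card (perm_cycle (snd h) x) = j \<and> cycle_prod G h x \<in> C}"
  define X1 where "X1 = {x\<in>S. \<not> r dvd Lx x \<and> Lx x = j \<and> cycle_prod G g x [^]\<^bsub>G\<^esub> r \<in> C}"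
  define X2 where "X2 = {x\<in>S. Lx x = r * j \<and> cycle_prod G g x \<in> C}"
  have c0: "wreath_type G n h C j * j = card X"
    unfolding X_def S_def by (rule G.wt_count[OF he assms(5)])
  have c2: "wreath_type G n g C (r * j) * (r * j) = card X2"
    unfolding X2_def S_def Lx_def by (rule G.wt_count[OF assms(4,5)])
  have XU0: "x \<in> X \<longleftrightarrow> x \<in> X1 \<union> X2" for x
    proof (cases "x \<in> S")
      case True
      note k = G.key[OF assms(4,3) True[unfolded S_def], folded h_def Lx_def]
      show ?thesis
      proof (cases "r dvd Lx x")
        case True
        then obtain K where "Lx x = r * K" by blast
        then show ?thesis using k True \<open>x \<in> S\<close> r0 unfolding X_def X1_def X2_def by auto
      next
        case False
        then show ?thesis using k \<open>x \<in> S\<close> unfolding X_def X1_def X2_def by auto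
      qed
    qed (auto simp: X_def X1_def X2_def)
  have XU: "X = X1 \<union> X2" using XU0 by blast
  have finS: "finite S" unfolding S_def by simp
  have cX: "card X = card X1 + card X2"
    unfolding XU by (rule card_Un_disjoint) (use finS in \<open>auto simp: X1_def X2_def\<close>)
  show ?thesis
  proof (cases "r dvd j")
    case True
    then have "X1 = {}" unfolding X1_def by auto
    then have "wreath_type G n h C j * j = (r * wreath_type G n g C (r * j)) * j"
      using c0 c2 cX by (simp add: ac_simps)
    then show ?thesis using True j0 unfolding h_def by simp
  next
    case False
    define Y where "Y D = {x\<in>S. Lx x = j \<and> cycle_prod G g x \<in> D}" for D
    have X1U0: "x \<in> X1 \<longleftrightarrow> x \<in> (\<Union>D\<in>Ds. Y D)" for x
      proof (cases "x \<in> S \<and> Lx x = j")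
        case True
        have y: "cycle_prod G g x \<in> carrier G" using G.cp_carrier[OF assms(4)] True unfolding S_def by blast
        have "cycle_prod G g x [^]\<^bsub>G\<^esub> r \<in> C \<longleftrightarrow> (\<exists>D\<in>Ds. cycle_prod G g x \<in> D)"
        proof
          assume a: "cycle_prod G g x [^]\<^bsub>G\<^esub> r \<in> C"
          have "conj_class G (cycle_prod G g x) \<in> Ds"
            unfolding Ds_def conj_classes_def
            using G.class_pow_cc[OF y] G.ccs_in[OF assms(5) a] y by auto
          then show "\<exists>D\<in>Ds. cycle_prod G g x \<in> D" using G.cc_self[OF y] by blast
        next
          assume "\<exists>D\<in>Ds. cycle_prod G g x \<in> D"
          then obtain D where D: "D \<in> Ds" "cycle_prod G g x \<in> D" by blast
          then have "cycle_prod G g x [^]\<^bsub>G\<^esub> r \<in> class_pow G D r" unfolding class_pow_def by blast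
          then show "cycle_prod G g x [^]\<^bsub>G\<^esub> r \<in> C" using D(1) unfolding Ds_def by simp
        qed
        then show ?thesis using True False unfolding X1_def Y_def by auto
      qed (auto simp: X1_def Y_def)
    have X1U: "X1 = (\<Union>D\<in>Ds. Y D)" using X1U0 by blast
    have finDs: "finite Ds" unfolding Ds_def conj_classes_def using assms(2) by simp
    have cX1: "card X1 = (\<Sum>D\<in>Ds. card (Y D))"
      unfolding X1U
    proof (rule card_UN_disjoint[OF finDs])
      show "\<forall>D\<in>Ds. finite (Y D)" unfolding Y_def using finS by simp
      show "\<forall>D1\<in>Ds. \<forall>D2\<in>Ds. D1 \<noteq> D2 \<longrightarrow> Y D1 \<inter> Y D2 = {}"
        unfolding Y_def Ds_def using G.ccs_disj by blast
    qed
    have cY: "card (Y D) = wreath_type G n g D j * j" if "D \<in> Ds" for D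
      using G.wt_count[OF assms(4), of D j] that unfolding Y_def Ds_def S_def Lx_def by simp
    have cX1': "card X1 = (\<Sum>D\<in>Ds. wreath_type G n g D j) * j"
      unfolding cX1 sum_distrib_right using cY by (rule sum.cong[OF refl])
    have "wreath_type G n h C j * j =
      ((\<Sum>D\<in>Ds. wreath_type G n g D j) + r * wreath_type G n g C (r * j)) * j"
      using c0 c2 cX cX1' by (simp add: algebra_simps)
    then show ?thesis using False j0 unfolding h_def Ds_def by simp
  qed
qed

end
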